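(* Let $\varepsilon>0$, $u\in\mathcal{SF}_\varepsilon$, and let $T^{\rm pos},T^{\rm neg}\in\mathcal{T}_\varepsilon(\mathbb{R}^2)$ be two triangles sharing a side (i.e. $\mathcal{H}^1(T^{\rm pos}\cap T^{\rm neg})=\varepsilon$) such that $\chi(u,T^{\rm pos})\ge0$ and $\chi(u,T^{\rm neg})\le0$. Then $F_\varepsilon(u,T^{\rm pos}\cup T^{\rm neg})\ge\tfrac53\varepsilon$.
   Context: Let $\hat e_1=(1,0)$, $\hat e_2=\tfrac12(1,\sqrt3)$, $\hat e_3=\tfrac12(-1,\sqrt3)$ and $\mathcal{L}=\{z_1\hat e_1+z_2\hat e_2\colon z_1,z_2\in\mathbb{Z}\}$, with sublattices $\mathcal{L}^1=\{z_1(\hat e_1+\hat e_2)+z_2(\hat e_2+\hat e_3)\colon z\in\mathbb{Z}^2\}$, $\mathcal{L}^2=\mathcal{L}^1+\hat e_1$, $\mathcal{L}^3=\mathcal{L}^1+\hat e_2$. $\mathcal{T}(\mathbb{R}^2)$ is the set of closed triangles $\mathrm{conv}\{i,j,k\}$, $i,j,k\in\mathcal L$ pairwise at distance 1; each has one vertex in each sublattice, labelled $i\in\mathcal{L}^1,j\in\mathcal{L}^2,k\in\mathcal{L}^3$. $\mathcal{L}_\varepsilon=\varepsilon\mathcal{L}$, $\mathcal{T}_\varepsilon(\mathbb{R}^2)=\varepsilon\mathcal{T}(\mathbb{R}^2)$, $\mathcal{T}_\varepsilon(A)=\{T\in\mathcal{T}_\varepsilon(\mathbb{R}^2)\colon T\subset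 A\}$. $\mathcal{SF}_\varepsilon=\{u\colon\mathcal{L}_\varepsilon\to\mathcal{S}^1\}$. $F_\varepsilon(u,T)=\varepsilon|u(\varepsilon i)+u(\varepsilon j)+u(\varepsilon k)|^2$ for $T=\mathrm{conv}\{\varepsilon i,\varepsilon j,\varepsilon k\}$, and $F_\varepsilon(u,A)=\sum_{T\in\mathcal{T}_\varepsilon(A)}F_\varepsilon(u,T)$. With $v\times w=v_1w_2-v_2w_1$, the chirality is $\chi(u,T)=\frac{2}{3\sqrt3}\big(u(\varepsilon i)\times u(\varepsilon j)+u(\varepsilon j)\times u(\varepsilon k)+u(\varepsilon k)\times u(\varepsilon i)\big)$. *)

theory Defs
  imports "HOL-Analysis.Analysis"
begin

text \<open>The plane is modelled by the complex numbers (as a real vector space);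
  spin values in S^1 are unit complex numbers.\<close>

definition e1 :: complex where "e1 = Complex 1 0"
definition e2 :: complex where "e2 = Complex (1/2) (sqrt 3 / 2)"
definition e3 :: complex where "e3 = Complex (-1/2) (sqrt 3 / 2)"

definition Lat :: "complex set" where
  "Lat = {of_int z1 * e1 + of_int z2 * e2 | z1 z2 :: int. True}"

definition Lat1 :: "complex set" where
  "Lat1 = {of_int z1 * (e1 + e2) + of_int z2 * (e2 + e3) | z1 z2 :: int. True}"

definition Lat2 :: "complex set" where
  "Lat2 = (\<lambda>x. x + e1) ` Lat1"

definition Lat3 :: "complex set" where
  "Lat3 = (\<lambda>x. x + e2) ` Lat1"

text \<open>Triangles of T(R^2), represented by their labelled vertices (i,j,k) with
  i in Lat1, j in Lat2, k in Lat3, pairwise at distance 1 (the labelling is unique).\<close>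
definition tris :: "(complex \<times> complex \<times> complex) set" where
  "tris = {(i, j, k). i \<in> Lat1 \<and> j \<in> Lat2 \<and> k \<in> Lat3 \<and>
                      dist i j = 1 \<and> dist j k = 1 \<and> dist k i = 1}"

definition tri_hull :: "real \<Rightarrow> complex \<times> complex \<times> complex \<Rightarrow> complex set" where
  "tri_hull \<epsilon> t = (case t of (i, j, k) \<Rightarrow> convex hull {\<epsilon> *\<^sub>R i, \<epsilon> *\<^sub>R j, \<epsilon> *\<^sub>R k})"

definition SF :: "real \<Rightarrow> (complex \<Rightarrow> complex) set" where
  "SF \<epsilon> = {u. \<forall>x \<in> (\<lambda>p. \<epsilon> *\<^sub>R p) ` Lat. norm (u x) = 1}"

definition cross :: "complex \<Rightarrow> complex \<Rightarrow> real" where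
  "cross v w = Re v * Im w - Im v * Re w"

definition chi :: "real \<Rightarrow> (complex \<Rightarrow> complex) \<Rightarrow> complex \<times> complex \<times> complex \<Rightarrow> real" where
  "chi \<epsilon> u t = (case t of (i, j, k) \<Rightarrow>
     2 / (3 * sqrt 3) * (cross (u (\<epsilon> *\<^sub>R i)) (u (\<epsilon> *\<^sub>R j))
                       + cross (u (\<epsilon> *\<^sub>R j)) (u (\<epsilon> *\<^sub>R k))
                       + cross (u (\<epsilon> *\<^sub>R k)) (u (\<epsilon> *\<^sub>R i))))"

definition Ftri :: "real \<Rightarrow> (complex \<Rightarrow> complex) \<Rightarrow> complex \<times> complex \<times> complex \<Rightarrow> real" where
  "Ftri \<epsilon> u t = (case t of (i, j, k) \<Rightarrow>
     \<epsilon> * (norm (u (\<epsilon> *\<^sub>R i) + u (\<epsilon> *\<^sub>R j) + u (\<epsilon> *\<^sub>R k)))\<^sup>2)"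

definition F :: "real \<Rightarrow> (complex \<Rightarrow> complex) \<Rightarrow> complex set \<Rightarrow> real" where
  "F \<epsilon> u A = (\<Sum>t \<in> {t \<in> tris. tri_hull \<epsilon> t \<subseteq> A}. Ftri \<epsilon> u t)"

text \<open>Two triangles share a side: their intersection is a segment of length eps
  (equivalently H^1 of the intersection equals eps).\<close>
definition share_side :: "real \<Rightarrow> complex \<times> complex \<times> complex \<Rightarrow> complex \<times> complex \<times> complex \<Rightarrow> bool" where
  "share_side \<epsilon> s t = (\<exists>a b. tri_hull \<epsilon> s \<inter> tri_hull \<epsilon> t = closed_segment a b \<and> dist a b = \<epsilon>)"

end

theory Submission
  imports Defs
begin



lemma e3_eq: "e3 = e2 - e1" by (simp add: e1_def e2_def e3_def complex_eq_iff)

lemma Lat1_sub: "x \<in> Lat1 \<Longrightarrow> x \<in> Lat"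
proof -
  assume "x \<in> Lat1"
  then obtain a b :: int where x: "x = of_int a * (e1 + e2) + of_int b * (e2 + e3)" unfolding Lat1_def by blast
  have "x = of_int (a - b) * e1 + of_int (a + 2*b) * e2" unfolding x e3_eq by (simp add: algebra_simps)
  thus ?thesis unfolding Lat_def by blast
qed

lemma Lat2_sub: "x \<in> Lat2 \<Longrightarrow> x \<in> Lat"
proof -
  assume "x \<in> Lat2"
  then obtain a b :: int where x: "x = of_int a * (e1 + e2) + of_int b * (e2 + e3) + e1" unfolding Lat1_def Lat2_def by blast
  have "x = of_int (a - b + 1) * e1 + of_int (a + 2*b) * e2" unfolding x e3_eq by (simp add: algebra_simps)
  thus ?thesis unfolding Lat_def by blast
qed

lemma Lat3_sub: "x \<in> Lat3 \<Longrightarrow> x \<in> Lat"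
proof -
  assume "x \<in> Lat3"
  then obtain a b :: int where x: "x = of_int a * (e1 + e2) + of_int b * (e2 + e3) + e2" unfolding Lat1_def Lat3_def by blast
  have "x = of_int (a - b) * e1 + of_int (a + 2*b + 1) * e2" unfolding x e3_eq by (simp add: algebra_simps)
  thus ?thesis unfolding Lat_def by blast
qed

lemma Re_Lat1: "x \<in> Lat1 \<Longrightarrow> \<exists>a::int. Re x = 3/2 * of_int a"
proof -
  assume "x \<in> Lat1"
  then obtain a b :: int where x: "x = of_int a * (e1 + e2) + of_int b * (e2 + e3)" unfolding Lat1_def by blast
  have "Re x = 3/2 * of_int a" unfolding x by (simp add: e1_def e2_def e3_def)
  thus ?thesis by blast
qed

lemma Re_Lat2: "x \<in> Lat2 \<Longrightarrow> \<exists>a::int. Re x = 3/2 * of_int a + 1"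
proof -
  assume "x \<in> Lat2"
  then obtain y where y: "y \<in> Lat1" "x = y + e1" unfolding Lat2_def by blast
  then obtain a :: int where "Re y = 3/2 * of_int a" using Re_Lat1 by blast
  hence "Re x = 3/2 * of_int a + 1" using y by (simp add: e1_def)
  thus ?thesis by blast
qed

lemma Re_Lat3: "x \<in> Lat3 \<Longrightarrow> \<exists>a::int. Re x = 3/2 * of_int a + 1/2"
proof -
  assume "x \<in> Lat3"
  then obtain y where y: "y \<in> Lat1" "x = y + e2" unfolding Lat3_def by blast
  then obtain a :: int where "Re y = 3/2 * of_int a" using Re_Lat1 by blast
  hence "Re x = 3/2 * of_int a + 1/2" using y by (simp add: e2_def)
  thus ?thesis by blast
qed

lemma disj12: "x \<in> Lat1 \<Longrightarrow> x \<in> Lat2 \<Longrightarrow> False"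
proof -
  assume "x \<in> Lat1" "x \<in> Lat2"
  then obtain a c :: int where "Re x = 3/2 * of_int a" "Re x = 3/2 * of_int c + 1"
    using Re_Lat1 Re_Lat2 by blast
  hence "real_of_int (3*a) = real_of_int (3*c+2)" by simp
  hence "3*a = 3*c+2" by (simp only: of_int_eq_iff)
  thus False by presburger
qed

lemma disj13: "x \<in> Lat1 \<Longrightarrow> x \<in> Lat3 \<Longrightarrow> False"
proof -
  assume "x \<in> Lat1" "x \<in> Lat3"
  then obtain a c :: int where "Re x = 3/2 * of_int a" "Re x = 3/2 * of_int c + 1/2"
    using Re_Lat1 Re_Lat3 by blast
  hence "real_of_int (3*a) = real_of_int (3*c+1)" by simp
  hence "3*a = 3*c+1" by (simp only: of_int_eq_iff)
  thus False by presburger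
qed

lemma disj23: "x \<in> Lat2 \<Longrightarrow> x \<in> Lat3 \<Longrightarrow> False"
proof -
  assume "x \<in> Lat2" "x \<in> Lat3"
  then obtain a c :: int where "Re x = 3/2 * of_int a + 1" "Re x = 3/2 * of_int c + 1/2"
    using Re_Lat2 Re_Lat3 by blast
  hence "real_of_int (3*a+1) = real_of_int (3*c)" by simp
  hence "3*a+1 = 3*c" by (simp only: of_int_eq_iff)
  thus False by presburger
qed


lemma nine0: fixes x1 x2 x3 x4 x5 x6 x7 x8 x9 :: real
  assumes "x1 \<ge> 0" "x2 \<ge> 0" "x3 \<ge> 0" "x4 \<ge> 0" "x5 \<ge> 0" "x6 \<ge> 0" "x7 \<ge> 0" "x8 \<ge> 0" "x9 \<ge> 0"
   "x1+x2+x3+(x4+x5+x6)+2*(x7+x8+x9) = 0"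
  shows "x1 = 0 \<and> x2 = 0 \<and> x3 = 0"
proof -
  have "x1 \<le> 0" using assms by (smt (verit))
  moreover have "x2 \<le> 0" using assms by (smt (verit))
  moreover have "x3 \<le> 0" using assms by (smt (verit))
  ultimately show ?thesis using assms(1-3) by auto
qed

lemma simplex_aux:
  fixes a1 a2 a3 b1 b2 b3 :: real
  assumes "a1 \<ge> 0" "a2 \<ge> 0" "a3 \<ge> 0" "a1+a2+a3 = 1"
    "b1 \<ge> 0" "b2 \<ge> 0" "b3 \<ge> 0" "b1+b2+b3 = 1"
    "(a1-b1)^2 + (a2-b2)^2 + (a1-b1)*(a2-b2) = 1"
  shows "(a1 = 1 \<and> a2 = 0 \<and> a3 = 0) \<or> (a1 = 0 \<and> a2 = 1 \<and> a3 = 0) \<or> (a1 = 0 \<and> a2 = 0 \<and> a3 = 1)"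
proof -
  have a3: "a3 = 1 - a1 - a2" using assms by (smt (verit))
  have b3: "b3 = 1 - b1 - b2" using assms by (smt (verit))
  have id: "a1*(1-a1)+a2*(1-a2)+a3*(1-a3) + (b1*(1-b1)+b2*(1-b2)+b3*(1-b3)) + 2*(a1*b1+a2*b2+a3*b3)
      = 2 - 2*((a1-b1)^2 + (a2-b2)^2 + (a1-b1)*(a2-b2))"
    unfolding a3 b3 by (simp add: power2_eq_square algebra_simps)
  have n1: "a1*(1-a1) \<ge> 0" "a2*(1-a2) \<ge> 0" "a3*(1-a3) \<ge> 0"
       "b1*(1-b1) \<ge> 0" "b2*(1-b2) \<ge> 0" "b3*(1-b3) \<ge> 0"
       "a1*b1 \<ge> 0" "a2*b2 \<ge> 0" "a3*b3 \<ge> 0"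
    using assms by (auto intro!: mult_nonneg_nonneg)
  have "a1*(1-a1) = 0 \<and> a2*(1-a2) = 0 \<and> a3*(1-a3) = 0"
    by (rule nine0[OF n1]) (use id[unfolded assms(9)] in simp)
  thus ?thesis using assms(4) by auto
qed


lemma diam:
  fixes p q r a b :: complex and e :: real
  assumes "dist p q = e" "dist q r = e" "dist r p = e" "e > 0"
    "a \<in> convex hull {p,q,r}" "b \<in> convex hull {p,q,r}" "dist a b = e"
  shows "a \<in> {p,q,r}"
proof -
  obtain a1 a2 a3 where A: "a = a1 *\<^sub>R p + a2 *\<^sub>R q + a3 *\<^sub>R r" "a1 \<ge> 0" "a2 \<ge> 0" "a3 \<ge> 0" "a1+a2+a3 = 1"
    using assms(5) unfolding convex_hull_3 by blast
  obtain b1 b2 b3 where B: "b = b1 *\<^sub>R p + b2 *\<^sub>R q + b3 *\<^sub>R r" "b1 \<ge> 0" "b2 \<ge> 0" "b3 \<ge> 0" "b1+b2+b3 = 1"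
    using assms(6) unfolding convex_hull_3 by blast
  define d1 where "d1 = a1 - b1"
  define d2 where "d2 = a2 - b2"
  define U where "U = p - r"
  define V where "V = q - r"
  have ab: "a - b = d1 *\<^sub>R U + d2 *\<^sub>R V"
  proof -
    have e3: "a3 = 1 - a1 - a2" using A B by linarith
    have e4: "b3 = 1 - b1 - b2" using A B by linarith
    show ?thesis unfolding A B d1_def d2_def U_def V_def e3 e4 by (simp add: algebra_simps)
  qed
  have nU: "(Re U)^2 + (Im U)^2 = e^2" using assms(3) unfolding U_def dist_complex_def
    by (metis cmod_power2 norm_minus_commute)
  have nV: "(Re V)^2 + (Im V)^2 = e^2" using assms(2) unfolding V_def dist_complex_def
    by (metis cmod_power2)
  have nUV: "(Re U - Re V)^2 + (Im U - Im V)^2 = e^2" using assms(1) unfolding U_def V_def dist_complex_def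
    using cmod_power2[of "p - q"] by simp
  have "e^2 = (Re (a-b))^2 + (Im (a-b))^2" using assms(7) unfolding dist_complex_def
    by (metis cmod_power2)
  also have "\<dots> = (d1 * Re U + d2 * Re V)^2 + (d1 * Im U + d2 * Im V)^2" unfolding ab by simp
  also have "\<dots> = d1^2 * ((Re U)^2+(Im U)^2) + d2^2*((Re V)^2+(Im V)^2) + d1*d2*(2*(Re U*Re V+Im U*Im V))"
    by (simp add: power2_eq_square algebra_simps)
  also have "\<dots> = e^2 * (d1^2 + d2^2 + d1*d2)"
  proof -
    have h: "2*(Re U * Re V + Im U * Im V) = e^2" using nU nV nUV by (simp add: power2_eq_square algebra_simps)
    show ?thesis unfolding nU nV h by (simp add: algebra_simps)
  qed
  finally have "d1^2 + d2^2 + d1*d2 = 1" using assms(4) by simp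
  from simplex_aux[OF A(2-5) B(2-5) this[unfolded d1_def d2_def]]
  show ?thesis unfolding A by auto
qed



lemma no_three:
  fixes a b x y z :: complex and e :: real
  assumes "dist a b = e" "e > 0" "x \<in> closed_segment a b" "y \<in> closed_segment a b" "z \<in> closed_segment a b"
    "dist x y = e" "dist y z = e" "dist z x = e"
  shows False
proof -
  have D: "dist s t = \<bar>u - v\<bar> * e" if "s = (1-u) *\<^sub>R a + u *\<^sub>R b" "t = (1-v) *\<^sub>R a + v *\<^sub>R b" for s t u v
  proof -
    have "s - t = (u - v) *\<^sub>R (b - a)" unfolding that by (simp add: algebra_simps)
    thus ?thesis using assms(1) by (simp add: dist_complex_def dist_commute norm_minus_commute)
  qed
  obtain u where u: "x = (1-u) *\<^sub>R a + u *\<^sub>R b" "0 \<le> u" "u \<le> 1" using assms(3) unfolding closed_segment_def by blast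
  obtain v where v: "y = (1-v) *\<^sub>R a + v *\<^sub>R b" "0 \<le> v" "v \<le> 1" using assms(4) unfolding closed_segment_def by blast
  obtain w where w: "z = (1-w) *\<^sub>R a + w *\<^sub>R b" "0 \<le> w" "w \<le> 1" using assms(5) unfolding closed_segment_def by blast
  have "\<bar>u - v\<bar> = 1" "\<bar>v - w\<bar> = 1" "\<bar>w - u\<bar> = 1"
    using D[OF u(1) v(1)] D[OF v(1) w(1)] D[OF w(1) u(1)] assms(2,6,7,8) by auto
  thus False using u v w by linarith
qed


lemma aux53: fixes A B s r :: real assumes "0 \<le> A - s/2" "-r \<le> B" "5/3 \<le> 3*r^2 - 2*r+2" "r^2 = s"
 shows "5/3 \<le> s + 1 + 2*A + (s+1+2*B)" using assms by linarith

lemma core_real: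
  fixes x1 x2 y1 y2 c1 c2 d1 d2 :: real
  assumes hx: "x1^2+x2^2 = 1" and hy: "y1^2+y2^2=1" and hc: "c1^2+c2^2=1" and hd: "d1^2+d2^2=1"
  and S1: "(y1-x1)*(c2-x2) - (y2-x2)*(c1-x1) \<ge> 0"
  and S2: "(y1-x1)*(d2-x2) - (y2-x2)*(d1-x1) \<le> 0"
  shows "(x1+y1+c1)^2+(x2+y2+c2)^2 + ((x1+y1+d1)^2+(x2+y2+d2)^2) \<ge> 5/3"
proof -
  define s1 :: real where "s1 = x1+y1"
  define s2 :: real where "s2 = x2+y2"
  define w1 :: real where "w1 = y1-x1"
  define w2 :: real where "w2 = y2-x2"
  define \<sigma> :: real where "\<sigma> = s1^2+s2^2"
  define Kk :: real where "Kk = w1* s2 - w2* s1"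
  have sw: "s1*w1+s2*w2 = 0" using hx hy unfolding s1_def s2_def w1_def w2_def by algebra
  have idc: "\<sigma> * ((y1-x1)*(c2-x2) - (y2-x2)*(c1-x1)) = Kk * (s1*c1+s2*c2 - \<sigma>/2)"
    using sw unfolding \<sigma>_def Kk_def s1_def s2_def w1_def w2_def by algebra
  have idd: "\<sigma> * ((y1-x1)*(d2-x2) - (y2-x2)*(d1-x1)) = Kk * (s1*d1+s2*d2 - \<sigma>/2)"
    using sw unfolding \<sigma>_def Kk_def s1_def s2_def w1_def w2_def by algebra
  have Kk2: "Kk^2 = \<sigma> * (4 - \<sigma>)"
    using sw hx hy unfolding \<sigma>_def Kk_def s1_def s2_def w1_def w2_def by algebra
  have sig0: "\<sigma> \<ge> 0" unfolding \<sigma>_def by simp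
  define r :: real where "r = sqrt \<sigma>"
  have r0: "r \<ge> 0" and rr: "r^2 = \<sigma>" using sig0 unfolding r_def by auto
  have CS: "\<bar>s1*e1+s2*e2\<bar> \<le> r" if "e1^2+e2^2 = 1" for e1 e2
  proof -
    have "(s1*e1+s2*e2)^2 \<le> \<sigma>"
    proof -
      have "\<sigma> - (s1*e1+s2*e2)^2 = (s1*e2-s2*e1)^2"
        using that unfolding \<sigma>_def by algebra
      thus ?thesis by (smt (verit) zero_le_power2)
    qed
    hence "sqrt ((s1*e1+s2*e2)^2) \<le> sqrt \<sigma>" by (rule real_sqrt_le_mono)
    thus ?thesis unfolding r_def by simp
  qed
  have ec: "(x1+y1+c1)^2+(x2+y2+c2)^2 = \<sigma> + 1 + 2*(s1*c1+s2*c2)"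
    using hc unfolding \<sigma>_def s1_def s2_def by algebra
  have ed: "(x1+y1+d1)^2+(x2+y2+d2)^2 = \<sigma> + 1 + 2*(s1*d1+s2*d2)"
    using hd unfolding \<sigma>_def s1_def s2_def by algebra
  have lc: "s1*c1+s2*c2 \<ge> -r" using CS[OF hc] by linarith
  have ld: "s1*d1+s2*d2 \<ge> -r" using CS[OF hd] by linarith
  have fin: "3*r^2 - 2*r + 2 \<ge> 5/3"
  proof -
    have "3*r^2 - 2*r + 2 - 5/3 = 3*(r-1/3)^2" by (simp add: power2_eq_square algebra_simps)
    thus ?thesis by (smt (verit) zero_le_power2)
  qed
  consider "Kk > 0" | "Kk < 0" | "Kk = 0" by linarith
  thus ?thesis
  proof cases
    case 1
    have "\<sigma> * ((y1-x1)*(c2-x2) - (y2-x2)*(c1-x1)) \<ge> 0" using S1 sig0 by simp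
    hence "Kk * (s1*c1+s2*c2 - \<sigma>/2) \<ge> 0" using idc by simp
    hence "s1*c1+s2*c2 - \<sigma>/2 \<ge> 0" using 1 by (simp add: zero_le_mult_iff)
    hence "5/3 \<le> \<sigma> + 1 + 2*(s1*c1+s2*c2) + (\<sigma>+1+2*(s1*d1+s2*d2))" using aux53 ld fin rr by blast
    thus ?thesis unfolding ec ed .
  next
    case 2
    have "\<sigma> * ((y1-x1)*(d2-x2) - (y2-x2)*(d1-x1)) \<le> 0" using S2 sig0 by (simp add: mult_nonneg_nonpos)
    hence "Kk * (s1*d1+s2*d2 - \<sigma>/2) \<le> 0" using idd by simp
    hence "s1*d1+s2*d2 - \<sigma>/2 \<ge> 0" using 2 by (simp add: mult_le_0_iff)
    hence "5/3 \<le> \<sigma> + 1 + 2*(s1*d1+s2*d2) + (\<sigma>+1+2*(s1*c1+s2*c2))" using aux53 lc fin rr by blast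
    thus ?thesis unfolding ec ed by linarith
  next
    case 3
    hence "\<sigma> * (4 - \<sigma>) = 0" using Kk2 by simp
    hence "\<sigma> = 0 \<or> \<sigma> = 4" by simp
    hence "r = 0 \<or> r = 2" unfolding r_def by auto
    thus ?thesis unfolding ec ed using lc ld rr by auto
  qed
qed
lemma Lat_fin: "finite {z \<in> Lat. norm z \<le> M}"
proof -
  define N where "N = \<lceil>2*M\<rceil>"
  have "{z \<in> Lat. norm z \<le> M} \<subseteq> (\<lambda>(z1,z2). of_int z1 * e1 + of_int z2 * e2) ` ({-N..N} \<times> {-N..N})"
  proof
    fix z assume z: "z \<in> {z \<in> Lat. norm z \<le> M}"
    then obtain z1 z2 :: int where zz: "z = of_int z1 * e1 + of_int z2 * e2" unfolding Lat_def by blast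
    have Re: "Re z = of_int z1 + of_int z2 / 2" and Im: "Im z = of_int z2 * (sqrt 3 / 2)"
      unfolding zz by (simp_all add: e1_def e2_def)
    have nz: "norm z \<le> M" using z by simp
    have "\<bar>Im z\<bar> \<le> M" using abs_Im_le_cmod[of z] nz by linarith
    hence h2: "\<bar>of_int z2\<bar> * (sqrt 3 / 2) \<le> M" unfolding Im by (simp add: abs_mult)
    have s3: "sqrt 3 \<ge> (1::real)" by simp
    have "\<bar>of_int z2\<bar> * (1/2) \<le> \<bar>of_int z2\<bar> * (sqrt 3 / 2)"
      using s3 by (intro mult_left_mono) auto
    hence b2: "\<bar>real_of_int z2\<bar> \<le> 2*M" using h2 by linarith
    have "\<bar>Re z\<bar> \<le> M" using abs_Re_le_cmod[of z] nz by linarith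
    hence b1: "\<bar>real_of_int z1\<bar> \<le> 2*M" unfolding Re using b2 by linarith
    have "2*M \<le> of_int N" unfolding N_def by linarith
    hence "\<bar>real_of_int z1\<bar> \<le> of_int N" "\<bar>real_of_int z2\<bar> \<le> of_int N" using b1 b2 by linarith+
    hence "\<bar>z1\<bar> \<le> N" "\<bar>z2\<bar> \<le> N" by (simp_all only: of_int_abs[symmetric] of_int_le_iff)
    hence "(z1, z2) \<in> {-N..N} \<times> {-N..N}" by auto
    thus "z \<in> (\<lambda>(z1,z2). of_int z1 * e1 + of_int z2 * e2) ` ({-N..N} \<times> {-N..N})"
      unfolding zz by force
  qed
  thus ?thesis by (rule finite_subset) auto
qed

lemma tris_fin:
  assumes "\<epsilon> > 0" "bounded A"
  shows "finite {t \<in> tris. tri_hull \<epsilon> t \<subseteq> A}"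
proof -
  obtain R where R: "\<And>x. x \<in> A \<Longrightarrow> norm x \<le> R" using assms(2) unfolding bounded_iff by blast
  define B where "B = {z \<in> Lat. norm z \<le> R/\<epsilon>}"
  have fB: "finite B" unfolding B_def by (rule Lat_fin)
  have inB: "x \<in> B" if "x \<in> Lat" "\<epsilon> *\<^sub>R x \<in> A" for x
  proof -
    have "\<epsilon> * norm x \<le> R" using R[OF that(2)] assms(1) by simp
    hence "norm x \<le> R/\<epsilon>" using assms(1) by (simp add: pos_le_divide_eq mult.commute)
    thus ?thesis unfolding B_def using that(1) by simp
  qed
  have "{t \<in> tris. tri_hull \<epsilon> t \<subseteq> A} \<subseteq> B \<times> B \<times> B"
  proof
    fix t assume t: "t \<in> {t \<in> tris. tri_hull \<epsilon> t \<subseteq> A}"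
    obtain i j k where tt: "t = (i,j,k)" by (cases t) auto
    have L: "i \<in> Lat1" "j \<in> Lat2" "k \<in> Lat3" using t unfolding tt tris_def by auto
    have sub: "convex hull {\<epsilon> *\<^sub>R i, \<epsilon> *\<^sub>R j, \<epsilon> *\<^sub>R k} \<subseteq> A" using t unfolding tt tri_hull_def by simp
    have "\<epsilon> *\<^sub>R i \<in> A" "\<epsilon> *\<^sub>R j \<in> A" "\<epsilon> *\<^sub>R k \<in> A" using sub hull_inc[of _ "{\<epsilon> *\<^sub>R i, \<epsilon> *\<^sub>R j, \<epsilon> *\<^sub>R k}" convex] by auto
    moreover have "i \<in> Lat" "j \<in> Lat" "k \<in> Lat" using L Lat1_sub Lat2_sub Lat3_sub by auto
    ultimately show "t \<in> B \<times> B \<times> B" unfolding tt using inB by auto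
  qed
  thus ?thesis by (rule finite_subset) (intro finite_cartesian_product fB)
qed

lemma Ftri_nonneg: "\<epsilon> > 0 \<Longrightarrow> Ftri \<epsilon> u t \<ge> 0"
  by (cases t) (simp add: Ftri_def)

lemma F_ge2:
  assumes "\<epsilon> > 0" "s \<in> tris" "t \<in> tris" "s \<noteq> t"
  shows "F \<epsilon> u (tri_hull \<epsilon> s \<union> tri_hull \<epsilon> t) \<ge> Ftri \<epsilon> u s + Ftri \<epsilon> u t"
proof -
  let ?A = "tri_hull \<epsilon> s \<union> tri_hull \<epsilon> t"
  have bh: "bounded (tri_hull \<epsilon> x)" for x
    by (cases x) (simp add: tri_hull_def bounded_convex_hull[OF finite_imp_bounded])
  have fin: "finite {t \<in> tris. tri_hull \<epsilon> t \<subseteq> ?A}"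
    by (rule tris_fin[OF assms(1)]) (simp add: bh)
  have sub: "{s, t} \<subseteq> {t \<in> tris. tri_hull \<epsilon> t \<subseteq> ?A}" using assms by auto
  have "Ftri \<epsilon> u s + Ftri \<epsilon> u t = (\<Sum>x\<in>{s,t}. Ftri \<epsilon> u x)" using assms(4) by simp
  also have "\<dots> \<le> (\<Sum>x\<in>{t \<in> tris. tri_hull \<epsilon> t \<subseteq> ?A}. Ftri \<epsilon> u x)"
    by (rule sum_mono2[OF fin sub]) (simp add: Ftri_nonneg assms(1))
  finally show ?thesis unfolding F_def .
qed
lemma core_cplx:
  fixes x y c d :: complex
  assumes "norm x = 1" "norm y = 1" "norm c = 1" "norm d = 1"
    "cross x y + cross y c + cross c x \<ge> 0" "cross x y + cross y d + cross d x \<le> 0"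
  shows "(norm (x+y+c))^2 + (norm (x+y+d))^2 \<ge> 5/3"
proof -
  have n: "(Re z)^2 + (Im z)^2 = 1" if "norm z = 1" for z using that cmod_power2[of z] by simp
  have S: "cross x y + cross y w + cross w x = (Re y - Re x)*(Im w - Im x) - (Im y - Im x)*(Re w - Re x)" for w
    unfolding cross_def by (simp add: algebra_simps)
  have "(Re x+Re y+Re c)^2+(Im x+Im y+Im c)^2 + ((Re x+Re y+Re d)^2+(Im x+Im y+Im d)^2) \<ge> 5/3"
  proof (rule core_real[OF n[OF assms(1)] n[OF assms(2)] n[OF assms(3)] n[OF assms(4)]])
    show "(Re y - Re x)*(Im c - Im x) - (Im y - Im x)*(Re c - Re x) \<ge> 0" using assms(5) unfolding S .
    show "(Re y - Re x)*(Im d - Im x) - (Im y - Im x)*(Re d - Re x) \<le> 0" using assms(6) unfolding S .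
  qed
  thus ?thesis unfolding cmod_power2 by simp
qed

lemma pos_fac: "(c::real) > 0 \<Longrightarrow> c * S \<ge> 0 \<Longrightarrow> S \<ge> 0" by (simp add: zero_le_mult_iff)
lemma neg_fac: "(c::real) > 0 \<Longrightarrow> c * S \<le> 0 \<Longrightarrow> S \<le> 0" by (simp add: mult_le_0_iff)

lemma chi_pos: "chi \<epsilon> u (i,j,k) \<ge> 0 \<Longrightarrow>
   cross (u (\<epsilon> *\<^sub>R i)) (u (\<epsilon> *\<^sub>R j)) + cross (u (\<epsilon> *\<^sub>R j)) (u (\<epsilon> *\<^sub>R k)) + cross (u (\<epsilon> *\<^sub>R k)) (u (\<epsilon> *\<^sub>R i)) \<ge> 0"
proof -
  assume h: "chi \<epsilon> u (i,j,k) \<ge> 0"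
  show ?thesis
  proof (rule pos_fac[of "2/(3 * sqrt 3)"])
    show "0 < 2/(3 * sqrt 3)" by simp
    show "0 \<le> 2/(3 * sqrt 3) * (cross (u (\<epsilon> *\<^sub>R i)) (u (\<epsilon> *\<^sub>R j)) + cross (u (\<epsilon> *\<^sub>R j)) (u (\<epsilon> *\<^sub>R k)) + cross (u (\<epsilon> *\<^sub>R k)) (u (\<epsilon> *\<^sub>R i)))"
      using h unfolding chi_def by (simp only: prod.case)
  qed
qed

lemma chi_neg: "chi \<epsilon> u (i,j,k) \<le> 0 \<Longrightarrow>
   cross (u (\<epsilon> *\<^sub>R i)) (u (\<epsilon> *\<^sub>R j)) + cross (u (\<epsilon> *\<^sub>R j)) (u (\<epsilon> *\<^sub>R k)) + cross (u (\<epsilon> *\<^sub>R k)) (u (\<epsilon> *\<^sub>R i)) \<le> 0"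
proof -
  assume h: "chi \<epsilon> u (i,j,k) \<le> 0"
  show ?thesis
  proof (rule neg_fac[of "2/(3 * sqrt 3)"])
    show "0 < 2/(3 * sqrt 3)" by simp
    show "2/(3 * sqrt 3) * (cross (u (\<epsilon> *\<^sub>R i)) (u (\<epsilon> *\<^sub>R j)) + cross (u (\<epsilon> *\<^sub>R j)) (u (\<epsilon> *\<^sub>R k)) + cross (u (\<epsilon> *\<^sub>R k)) (u (\<epsilon> *\<^sub>R i))) \<le> 0"
      using h unfolding chi_def by (simp only: prod.case)
  qed
qed

lemma match:
  fixes \<epsilon> :: real
  assumes "\<epsilon> \<noteq> 0" "i \<in> Lat1" "i' \<in> Lat1" "j \<in> Lat2" "j' \<in> Lat2" "k \<in> Lat3" "k' \<in> Lat3"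
    "v \<in> {\<epsilon> *\<^sub>R i, \<epsilon> *\<^sub>R j, \<epsilon> *\<^sub>R k}" "v \<in> {\<epsilon> *\<^sub>R i', \<epsilon> *\<^sub>R j', \<epsilon> *\<^sub>R k'}"
  shows "(v = \<epsilon> *\<^sub>R i \<and> i = i') \<or> (v = \<epsilon> *\<^sub>R j \<and> j = j') \<or> (v = \<epsilon> *\<^sub>R k \<and> k = k')"
proof -
  have v1: "v = \<epsilon> *\<^sub>R i \<or> v = \<epsilon> *\<^sub>R j \<or> v = \<epsilon> *\<^sub>R k" using assms(8) by simp
  have v2: "v = \<epsilon> *\<^sub>R i' \<or> v = \<epsilon> *\<^sub>R j' \<or> v = \<epsilon> *\<^sub>R k'" using assms(9) by simp
  have c: "\<epsilon> *\<^sub>R x = \<epsilon> *\<^sub>R y \<longleftrightarrow> x = y" for x y :: complex using assms(1) by simp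
  from v1 v2 show ?thesis
    by (elim disjE) (use assms(2-7) c disj12[of i] disj13[of i] disj12[of i'] disj23[of j] disj13[of i'] disj23[of j'] in auto)
qed

theorem lemma3p2:
  fixes \<epsilon> :: real and u :: "complex \<Rightarrow> complex"
    and Tpos Tneg :: "complex \<times> complex \<times> complex"
  assumes "\<epsilon> > 0"
    and "u \<in> SF \<epsilon>"
    and "Tpos \<in> tris" and "Tneg \<in> tris"
    and "share_side \<epsilon> Tpos Tneg"
    and "chi \<epsilon> u Tpos \<ge> 0" and "chi \<epsilon> u Tneg \<le> 0"
  shows "F \<epsilon> u (tri_hull \<epsilon> Tpos \<union> tri_hull \<epsilon> Tneg) \<ge> 5 / 3 * \<epsilon>"
proof -
  obtain i j k where Tp: "Tpos = (i,j,k)" by (cases Tpos) auto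
  obtain i' j' k' where Tn: "Tneg = (i',j',k')" by (cases Tneg) auto
  have ti: "i \<in> Lat1" "j \<in> Lat2" "k \<in> Lat3" "dist i j = 1" "dist j k = 1" "dist k i = 1"
    using assms(3) unfolding Tp tris_def by auto
  have ti': "i' \<in> Lat1" "j' \<in> Lat2" "k' \<in> Lat3" "dist i' j' = 1" "dist j' k' = 1" "dist k' i' = 1"
    using assms(4) unfolding Tn tris_def by auto
  have sd: "dist (\<epsilon> *\<^sub>R x) (\<epsilon> *\<^sub>R y) = \<epsilon> * dist x y" for x y :: complex
  proof -
    have "\<epsilon> *\<^sub>R x - \<epsilon> *\<^sub>R y = \<epsilon> *\<^sub>R (x - y)" by (simp add: scaleR_diff_right)
    thus ?thesis using assms(1) by (simp add: dist_complex_def)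
  qed
  have dv: "dist (\<epsilon> *\<^sub>R i) (\<epsilon> *\<^sub>R j) = \<epsilon>" "dist (\<epsilon> *\<^sub>R j) (\<epsilon> *\<^sub>R k) = \<epsilon>" "dist (\<epsilon> *\<^sub>R k) (\<epsilon> *\<^sub>R i) = \<epsilon>"
    using sd ti by auto
  have dv': "dist (\<epsilon> *\<^sub>R i') (\<epsilon> *\<^sub>R j') = \<epsilon>" "dist (\<epsilon> *\<^sub>R j') (\<epsilon> *\<^sub>R k') = \<epsilon>" "dist (\<epsilon> *\<^sub>R k') (\<epsilon> *\<^sub>R i') = \<epsilon>"
    using sd ti' by auto
  define H where "H = convex hull {\<epsilon> *\<^sub>R i, \<epsilon> *\<^sub>R j, \<epsilon> *\<^sub>R k}"
  define H' where "H' = convex hull {\<epsilon> *\<^sub>R i', \<epsilon> *\<^sub>R j', \<epsilon> *\<^sub>R k'}"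
  have hH: "tri_hull \<epsilon> Tpos = H" "tri_hull \<epsilon> Tneg = H'" unfolding Tp Tn tri_hull_def H_def H'_def by simp_all
  obtain a b where seg: "H \<inter> H' = closed_segment a b" "dist a b = \<epsilon>"
    using assms(5) unfolding share_side_def hH by blast
  have ab: "a \<in> H" "a \<in> H'" "b \<in> H" "b \<in> H'" using seg(1) ends_in_segment[of a b] by blast+
  have dba: "dist b a = \<epsilon>" using seg(2) by (simp add: dist_commute)
  have aV: "a \<in> {\<epsilon> *\<^sub>R i, \<epsilon> *\<^sub>R j, \<epsilon> *\<^sub>R k}"
    by (rule diam[OF dv assms(1) ab(1)[unfolded H_def] ab(3)[unfolded H_def] seg(2)])
  have bV: "b \<in> {\<epsilon> *\<^sub>R i, \<epsilon> *\<^sub>R j, \<epsilon> *\<^sub>R k}"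
    by (rule diam[OF dv assms(1) ab(3)[unfolded H_def] ab(1)[unfolded H_def] dba])
  have aV': "a \<in> {\<epsilon> *\<^sub>R i', \<epsilon> *\<^sub>R j', \<epsilon> *\<^sub>R k'}"
    by (rule diam[OF dv' assms(1) ab(2)[unfolded H'_def] ab(4)[unfolded H'_def] seg(2)])
  have bV': "b \<in> {\<epsilon> *\<^sub>R i', \<epsilon> *\<^sub>R j', \<epsilon> *\<^sub>R k'}"
    by (rule diam[OF dv' assms(1) ab(4)[unfolded H'_def] ab(2)[unfolded H'_def] dba])
  have ne: "a \<noteq> b" using seg(2) assms(1) by auto
  have e0: "\<epsilon> \<noteq> 0" using assms(1) by simp
  have ma: "(a = \<epsilon> *\<^sub>R i \<and> i = i') \<or> (a = \<epsilon> *\<^sub>R j \<and> j = j') \<or> (a = \<epsilon> *\<^sub>R k \<and> k = k')"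
    by (rule match[OF e0 ti(1) ti'(1) ti(2) ti'(2) ti(3) ti'(3) aV aV'])
  have mb: "(b = \<epsilon> *\<^sub>R i \<and> i = i') \<or> (b = \<epsilon> *\<^sub>R j \<and> j = j') \<or> (b = \<epsilon> *\<^sub>R k \<and> k = k')"
    by (rule match[OF e0 ti(1) ti'(1) ti(2) ti'(2) ti(3) ti'(3) bV bV'])
  have two: "(i = i' \<and> j = j') \<or> (j = j' \<and> k = k') \<or> (k = k' \<and> i = i')"
    using ma mb ne by (elim disjE conjE) simp_all
  have notall: "Tpos \<noteq> Tneg"
  proof
    assume "Tpos = Tneg"
    hence "H' = H" using hH by simp
    hence "H = closed_segment a b" using seg(1) by simp
    moreover have "\<epsilon> *\<^sub>R i \<in> H" "\<epsilon> *\<^sub>R j \<in> H" "\<epsilon> *\<^sub>R k \<in> H"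
      unfolding H_def by (simp_all add: hull_inc)
    ultimately have "\<epsilon> *\<^sub>R i \<in> closed_segment a b" "\<epsilon> *\<^sub>R j \<in> closed_segment a b" "\<epsilon> *\<^sub>R k \<in> closed_segment a b"
      by simp_all
    thus False using no_three[OF seg(2) assms(1) _ _ _ dv] by blast
  qed
  have unit: "norm (u (\<epsilon> *\<^sub>R x)) = 1" if "x \<in> Lat" for x
    using assms(2) that unfolding SF_def by auto
  define p where "p = u (\<epsilon> *\<^sub>R i)"
  define q where "q = u (\<epsilon> *\<^sub>R j)"
  define r where "r = u (\<epsilon> *\<^sub>R k)"
  define p' where "p' = u (\<epsilon> *\<^sub>R i')"
  define q' where "q' = u (\<epsilon> *\<^sub>R j')"
  define r' where "r' = u (\<epsilon> *\<^sub>R k')"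
  have un: "norm p = 1" "norm q = 1" "norm r = 1" "norm p' = 1" "norm q' = 1" "norm r' = 1"
    unfolding p_def q_def r_def p'_def q'_def r'_def
    using unit ti ti' Lat1_sub Lat2_sub Lat3_sub by auto
  have Sp: "cross p q + cross q r + cross r p \<ge> 0"
    unfolding p_def q_def r_def by (rule chi_pos) (use assms(6) Tp in simp)
  have Sn: "cross p' q' + cross q' r' + cross r' p' \<le> 0"
    unfolding p'_def q'_def r'_def by (rule chi_neg) (use assms(7) Tn in simp)
  have Fp: "Ftri \<epsilon> u Tpos = \<epsilon> * (norm (p + q + r))^2" unfolding Tp Ftri_def p_def q_def r_def by simp
  have Fn: "Ftri \<epsilon> u Tneg = \<epsilon> * (norm (p' + q' + r'))^2" unfolding Tn Ftri_def p'_def q'_def r'_def by simp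
  have core: "(norm (p+q+r))^2 + (norm (p'+q'+r'))^2 \<ge> 5/3"
  proof -
    consider "i = i' \<and> j = j'" | "j = j' \<and> k = k'" | "k = k' \<and> i = i'" using two by blast
    thus ?thesis
    proof cases
      case 1
      hence "p' = p" "q' = q" unfolding p_def p'_def q_def q'_def by auto
      thus ?thesis using core_cplx[of p q r r'] un Sp Sn by simp
    next
      case 2
      hence "q' = q" "r' = r" unfolding r_def r'_def q_def q'_def by auto
      hence "(norm (q+r+p))^2 + (norm (q+r+p'))^2 \<ge> 5/3" using core_cplx[of q r p p'] un Sp Sn by simp
      moreover have "q+r+p = p+q+r" "q+r+p' = p'+q'+r'" using \<open>q' = q\<close> \<open>r' = r\<close> by (simp_all add: algebra_simps)
      ultimately show ?thesis by simp
    next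
      case 3
      hence "r' = r" "p' = p" unfolding r_def r'_def p_def p'_def by auto
      hence "(norm (r+p+q))^2 + (norm (r+p+q'))^2 \<ge> 5/3" using core_cplx[of r p q q'] un Sp Sn by simp
      moreover have "r+p+q = p+q+r" "r+p+q' = p'+q'+r'" using \<open>r' = r\<close> \<open>p' = p\<close> by (simp_all add: algebra_simps)
      ultimately show ?thesis by simp
    qed
  qed
  have "5/3 * \<epsilon> \<le> Ftri \<epsilon> u Tpos + Ftri \<epsilon> u Tneg"
  proof -
    have "\<epsilon> * (5/3) \<le> \<epsilon> * ((norm (p+q+r))^2 + (norm (p'+q'+r'))^2)"
      by (rule mult_left_mono[OF core]) (use assms(1) in simp)
    thus ?thesis unfolding Fp Fn by (simp add: distrib_left mult.commute)
  qed
  also have "\<dots> \<le> F \<epsilon> u (tri_hull \<epsilon> Tpos \<union> tri_hull \<epsilon> Tneg)"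
    by (rule F_ge2[OF assms(1,3,4) notall])
  finally show ?thesis .
qed
end
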